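(* Assume $r$ is not a codeword of the GRS code (equivalently $\deg R\ge k$). Let $B\in\mathbb F_q[X]^{(\ell+1)\times(\ell+1)}$ represent a basis of $M_{s,\ell}$ such that $BW_\ell$ is in weak Popov form. Let $C^{\mathrm I}$ be the $(\ell+2)\times(\ell+2)$ matrix whose first $\ell+1$ rows are the rows of $B$ each extended by a final zero entry, and whose last row is the coefficient vector (of length $\ell+2$) of $Y^{\ell-s+1}(Y-R(X))^s$. Then $\Delta(C^{\mathrm I}W_{\ell+1})=s(\deg R-k+1)\le s(n-k)$.
   Context: Let $\mathbb F_q$ be a finite field, $1\le k<n<q$, $\alpha_0,\dots,\alpha_{n-1}$ distinct nonzero elements of $\mathbb F_q$, $w_0,\dots,w_{n-1}$ nonzero elements of $\mathbb F_q$. The GRS code is $\{(w_0f(\alpha_0),\dots,w_{n-1}f(\alpha_{n-1})): f\in\mathbb F_q[X],\deg f<k\}$. Let $r\in\mathbb F_q^n$, $r_i'=r_i/w_i$, and $R$ the unique polynomial of degree $<n$ with $R(\alpha_i)=r_i'$. For positive integers $s\le\ell$, $M_{s,\ell}$ is the $\mathbb F_q[X]$-module of all $Q\in\mathbb F_q[X,Y]$ of $Y$-degree at most $\ell$ such that for each $i$, $Q(X+\alpha_i,Y+r_i')$ has no monomials of total degree less than $s$. A polynomial $\sum_{t}Q_t(X)Y^t$ has coefficient vector $(Q_0,Q_1,\dots)$; a matrix represents a basis if its rows are the coefficient vectors of the basis elements. $W_\ell=\mathrm{diag}(1,X^{k-1},\dots,X^{\ell(k-1)})$. For $v\in\mathbb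 F_q[X]^m$, $\deg v=\max_i\deg v_i$, $\mathrm{LP}(v)=\max\{i:\deg v_i=\deg v\}$; a matrix is in weak Popov form if its rows have pairwise different leading positions. For a square matrix $V$ with rows $v_i$, $\deg V=\sum_i\deg v_i$ and $\Delta(V)=\deg V-\deg\det V$. *)

theory Defs
  imports "Jordan_Normal_Form.Determinant" "HOL-Computational_Algebra.Polynomial"
begin

text \<open>Bivariate polynomials Q(X,Y) = sum_t Q_t(X) Y^t are represented as
  'a poly poly: the outer variable is Y, the coefficients are polynomials in X.\<close>

definition shift_XY :: "'a::comm_ring_1 \<Rightarrow> 'a \<Rightarrow> 'a poly poly \<Rightarrow> 'a poly poly" where
  "shift_XY a b Q = map_poly (\<lambda>p. pcompose p [:a, 1:]) (pcompose Q [:[:b:], 1:])"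
  \<comment> \<open>Q(X + a, Y + b)\<close>

definition no_low_monomials :: "nat \<Rightarrow> 'a::comm_ring_1 poly poly \<Rightarrow> bool" where
  "no_low_monomials s Q \<longleftrightarrow> (\<forall>i j. i + j < s \<longrightarrow> coeff (coeff Q j) i = 0)"

definition M_module ::
  "nat \<Rightarrow> nat \<Rightarrow> nat \<Rightarrow> (nat \<Rightarrow> 'a::field) \<Rightarrow> (nat \<Rightarrow> 'a) \<Rightarrow> 'a poly poly set" where
  "M_module n s l alpha r' = {Q. degree Q \<le> l \<and>
       (\<forall>i<n. no_low_monomials s (shift_XY (alpha i) (r' i) Q))}"

definition vec_to_bpoly :: "'a::comm_ring_1 poly vec \<Rightarrow> 'a poly poly" where
  "vec_to_bpoly v = (\<Sum>j<dim_vec v. monom (v $ j) j)"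

definition coeff_vec :: "nat \<Rightarrow> 'a::zero poly \<Rightarrow> 'a vec" where
  "coeff_vec m Q = vec m (\<lambda>j. coeff Q j)"

definition represents_basis :: "'a::field poly mat \<Rightarrow> 'a poly poly set \<Rightarrow> bool" where
  "represents_basis B M \<longleftrightarrow>
     (\<forall>i<dim_row B. vec_to_bpoly (row B i) \<in> M) \<and>
     (\<forall>Q\<in>M. \<exists>!c. dim_vec c = dim_row B \<and>
                Q = (\<Sum>i<dim_row B. smult (c $ i) (vec_to_bpoly (row B i))))"

definition W_mat :: "nat \<Rightarrow> nat \<Rightarrow> 'a::comm_ring_1 poly mat" where
  "W_mat k l = mat (l+1) (l+1) (\<lambda>(i,j). if i = j then monom 1 (i * (k - 1)) else 0)"

definition vdeg :: "'a::zero poly vec \<Rightarrow> nat" where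
  "vdeg v = (if \<exists>i<dim_vec v. v $ i \<noteq> 0
             then Max {degree (v $ i) | i. i < dim_vec v \<and> v $ i \<noteq> 0} else 0)"

definition LP :: "'a::zero poly vec \<Rightarrow> nat" where
  "LP v = Max {i. i < dim_vec v \<and> v $ i \<noteq> 0 \<and> degree (v $ i) = vdeg v}"

definition weak_popov :: "'a::zero poly mat \<Rightarrow> bool" where
  "weak_popov V \<longleftrightarrow> (\<forall>i<dim_row V. \<forall>j<dim_row V. i \<noteq> j \<longrightarrow> LP (row V i) \<noteq> LP (row V j))"

definition mat_deg :: "'a::zero poly mat \<Rightarrow> nat" where
  "mat_deg V = (\<Sum>i<dim_row V. vdeg (row V i))"

definition Delta :: "'a::comm_ring_1 poly mat \<Rightarrow> int" where
  "Delta V = int (mat_deg V) - int (degree (det V))"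

definition C_I :: "'a::comm_ring_1 poly mat \<Rightarrow> nat \<Rightarrow> nat \<Rightarrow> 'a poly \<Rightarrow> 'a poly mat" where
  "C_I B l s R = mat (l+2) (l+2) (\<lambda>(i,j).
      if i \<le> l then (if j \<le> l then B $$ (i,j) else 0)
      else coeff_vec (l+2) (monom 1 (l - s + 1) * [:-R, 1:] ^ s) $ j)"

end

theory Submission
  imports Defs
begin


lemma coeff_mult_bound:
  fixes p q :: "'a::comm_semiring_1 poly"
  assumes "degree p \<le> a" "degree q \<le> b"
  shows "coeff (p*q) (a+b) = coeff p a * coeff q b"
proof -
  have "coeff (p*q) (a+b) = (\<Sum>i\<le>a+b. coeff p i * coeff q (a+b-i))" by (rule coeff_mult)
  also have "\<dots> = coeff p a * coeff q (a+b-a)"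
  proof (rule sum.mono_neutral_right[where S="{a}", simplified])
    show "\<forall>i\<in>{..a + b} - {a}. coeff p i * coeff q (a + b - i) = 0"
    proof
      fix i assume i: "i \<in> {..a + b} - {a}"
      show "coeff p i * coeff q (a + b - i) = 0"
      proof (cases "i < a")
        case True then have "a+b-i > b" using i by auto
        then show ?thesis using assms(2) by (simp add: coeff_eq_0)
      next
        case False then have "i > a" using i by auto
        then show ?thesis using assms(1) by (simp add: coeff_eq_0)
      qed
    qed
  qed auto
  finally show ?thesis by simp
qed

lemma coeff_prod_bound:
  fixes f :: "'b \<Rightarrow> 'a::comm_semiring_1 poly"
  assumes "finite S" "\<forall>i\<in>S. degree (f i) \<le> d i"
  shows "degree (prod f S) \<le> sum d S \<and> coeff (prod f S) (sum d S) = (\<Prod>i\<in>S. coeff (f i) (d i))"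
  using assms
proof (induction S rule: finite_induct)
  case empty then show ?case by simp
next
  case (insert x F)
  then have IH: "degree (prod f F) \<le> sum d F" "coeff (prod f F) (sum d F) = (\<Prod>i\<in>F. coeff (f i) (d i))"
    and dx: "degree (f x) \<le> d x" by auto
  have "degree (f x * prod f F) \<le> d x + sum d F"
    using degree_mult_le[of "f x" "prod f F"] IH dx by linarith
  moreover have "coeff (f x * prod f F) (d x + sum d F) = coeff (f x) (d x) * coeff (prod f F) (sum d F)"
    by (rule coeff_mult_bound[OF dx IH(1)])
  ultimately show ?case using insert IH by simp
qed

lemma vdeg_props:
  fixes v :: "'a::zero poly vec"
  assumes "\<exists>i<dim_vec v. v $ i \<noteq> 0"
  shows "\<forall>j<dim_vec v. degree (v $ j) \<le> vdeg v"
    and "LP v < dim_vec v" "v $ LP v \<noteq> 0" "degree (v $ LP v) = vdeg v"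
    and "\<forall>j<dim_vec v. v $ j \<noteq> 0 \<and> degree (v $ j) = vdeg v \<longrightarrow> j \<le> LP v"
proof -
  let ?D = "{degree (v $ i) | i. i < dim_vec v \<and> v $ i \<noteq> 0}"
  have fin: "finite ?D" by simp
  have ne: "?D \<noteq> {}" using assms by auto
  have vd: "vdeg v = Max ?D" using assms unfolding vdeg_def by simp
  show "\<forall>j<dim_vec v. degree (v $ j) \<le> vdeg v"
  proof (intro allI impI)
    fix j assume "j < dim_vec v"
    then show "degree (v $ j) \<le> vdeg v"
      using vd fin by (cases "v $ j = 0") (auto intro!: Max_ge)
  qed
  have "vdeg v \<in> ?D" using vd Max_in[OF fin ne] by simp
  then have ex: "\<exists>i. i < dim_vec v \<and> v $ i \<noteq> 0 \<and> degree (v $ i) = vdeg v" by auto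
  let ?L = "{i. i < dim_vec v \<and> v $ i \<noteq> 0 \<and> degree (v $ i) = vdeg v}"
  have finL: "finite ?L" by simp
  have neL: "?L \<noteq> {}" using ex by auto
  have "LP v \<in> ?L" unfolding LP_def using Max_in[OF finL neL] .
  then show "LP v < dim_vec v" "v $ LP v \<noteq> 0" "degree (v $ LP v) = vdeg v" by auto
  show "\<forall>j<dim_vec v. v $ j \<noteq> 0 \<and> degree (v $ j) = vdeg v \<longrightarrow> j \<le> LP v"
    unfolding LP_def using finL by (auto intro!: Max_ge)
qed

lemma vdeg_eqI:
  fixes v :: "'a::zero poly vec"
  assumes "\<forall>j<dim_vec v. degree (v $ j) \<le> d" "j0 < dim_vec v" "v $ j0 \<noteq> 0" "degree (v $ j0) = d"
  shows "vdeg v = d"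
proof -
  let ?D = "{degree (v $ i) | i. i < dim_vec v \<and> v $ i \<noteq> 0}"
  have "vdeg v = Max ?D" using assms unfolding vdeg_def by auto
  also have "\<dots> = d"
    by (rule Max_eqI) (use assms in auto)
  finally show ?thesis .
qed


lemma perm_le_eq:
  assumes p: "p permutes {0..<m::nat}" and q: "q permutes {0..<m}"
    and le: "\<forall>i<m. p i \<le> q i"
  shows "p = q"
proof -
  have "sum id {0..<m} = sum (id \<circ> p) {0..<m}" by (rule sum.permute[OF p])
  moreover have "sum id {0..<m} = sum (id \<circ> q) {0..<m}" by (rule sum.permute[OF q])
  ultimately have eq: "sum p {0..<m} = sum q {0..<m}" by simp
  have "\<forall>i<m. p i = q i"
  proof (rule ccontr)
    assume "\<not> (\<forall>i<m. p i = q i)"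
    then obtain i where i: "i < m" "p i \<noteq> q i" by auto
    have "sum p {0..<m} < sum q {0..<m}"
      by (rule sum_strict_mono_ex1) (use le i in \<open>auto intro!: bexI[of _ i] simp: le_neq_implies_less\<close>)
    with eq show False by simp
  qed
  moreover have "\<forall>i. i \<ge> m \<longrightarrow> p i = i \<and> q i = i"
    using p q by (auto intro!: permutes_not_in)
  ultimately show ?thesis by (metis not_le ext)
qed

lemma weak_popov_det:
  fixes V :: "'a::field poly mat"
  assumes V: "V \<in> carrier_mat m m" and wp: "weak_popov V"
    and nz: "\<forall>i<m. \<exists>j<m. V $$ (i,j) \<noteq> 0"
  shows "det V \<noteq> 0 \<and> degree (det V) = mat_deg V"
proof -
  have dims: "dim_row V = m" "dim_col V = m" using V by auto
  define d where "d i = vdeg (row V i)" for i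
  define Ds where "Ds = sum d {0..<m}"
  have rowP: "\<forall>j<m. degree (V $$ (i,j)) \<le> d i"
    "LP (row V i) < m" "V $$ (i, LP (row V i)) \<noteq> 0" "degree (V $$ (i, LP (row V i))) = d i"
    "\<forall>j<m. V $$ (i,j) \<noteq> 0 \<and> degree (V $$ (i,j)) = d i \<longrightarrow> j \<le> LP (row V i)"
    if i: "i < m" for i
  proof -
    have ex: "\<exists>j<dim_vec (row V i). row V i $ j \<noteq> 0" using nz i dims by (metis index_row(1) index_row(2) dims(2))
    note P = vdeg_props[OF ex]
    show "\<forall>j<m. degree (V $$ (i,j)) \<le> d i" using P(1) i dims by (auto simp: d_def)
    show "LP (row V i) < m" using P(2) dims by simp
    then show "V $$ (i, LP (row V i)) \<noteq> 0" "degree (V $$ (i, LP (row V i))) = d i"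
      using P(3,4) i dims by (auto simp: d_def)
    show "\<forall>j<m. V $$ (i,j) \<noteq> 0 \<and> degree (V $$ (i,j)) = d i \<longrightarrow> j \<le> LP (row V i)"
      using P(5) i dims by (auto simp: d_def)
  qed
  define pi where "pi i = (if i < m then LP (row V i) else i)" for i
  have inj: "inj_on pi {0..<m}"
    using wp dims unfolding weak_popov_def inj_on_def pi_def by (metis atLeastLessThan_iff)
  have img: "pi ` {0..<m} \<subseteq> {0..<m}" using rowP(2) by (auto simp: pi_def)
  have "pi ` {0..<m} = {0..<m}" by (rule endo_inj_surj[OF _ img inj]) simp
  then have bij: "bij_betw pi {0..<m} {0..<m}" using inj by (simp add: bij_betw_def)
  have pip: "pi permutes {0..<m}"
    by (rule bij_imp_permutes[OF bij]) (auto simp: pi_def)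
  define T where "T p = signof p * (\<Prod>i = 0..<m. V $$ (i, p i))" for p :: "nat \<Rightarrow> nat"
  have detV: "det V = (\<Sum>p\<in>{p. p permutes {0..<m}}. T p)"
    unfolding T_def by (rule det_def'[OF V])
  have Tp: "degree (T p) \<le> Ds \<and> coeff (T p) Ds = signof p * (\<Prod>i = 0..<m. coeff (V $$ (i, p i)) (d i))"
    if p: "p permutes {0..<m}" for p
  proof -
    have "\<forall>i\<in>{0..<m}. degree (V $$ (i, p i)) \<le> d i"
      using rowP(1) permutes_in_image[OF p] by auto
    from coeff_prod_bound[OF _ this] have
      "degree (\<Prod>i = 0..<m. V $$ (i, p i)) \<le> Ds"
      "coeff (\<Prod>i = 0..<m. V $$ (i, p i)) Ds = (\<Prod>i = 0..<m. coeff (V $$ (i, p i)) (d i))"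
      unfolding Ds_def by auto
    moreover have "(signof p :: 'a poly) = [:signof p:]"
      by (simp add: of_int_poly)
    ultimately show ?thesis unfolding T_def by (simp add: degree_mult_le)
  qed
  have zero: "coeff (T p) Ds = 0" if p: "p permutes {0..<m}" and ne: "p \<noteq> pi" for p
  proof (rule ccontr)
    assume "coeff (T p) Ds \<noteq> 0"
    then have "(\<Prod>i = 0..<m. coeff (V $$ (i, p i)) (d i)) \<noteq> 0" using Tp[OF p] by auto
    then have c: "\<forall>i<m. coeff (V $$ (i, p i)) (d i) \<noteq> 0" by auto
    have "\<forall>i<m. p i \<le> pi i"
    proof (intro allI impI)
      fix i assume i: "i < m"
      have pim: "p i < m" using permutes_in_image[OF p] i by auto
      have v0: "V $$ (i, p i) \<noteq> 0" using c i by auto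
      have "degree (V $$ (i, p i)) \<ge> d i" using c i le_degree by blast
      then have "degree (V $$ (i, p i)) = d i" using rowP(1)[OF i] pim by (meson le_antisym)
      then show "p i \<le> pi i" using rowP(5)[OF i] pim v0 i by (auto simp: pi_def)
    qed
    with perm_le_eq[OF p pip] ne show False by simp
  qed
  have "coeff (det V) Ds = (\<Sum>p\<in>{p. p permutes {0..<m}}. coeff (T p) Ds)"
    unfolding detV by (simp add: coeff_sum)
  also have "\<dots> = coeff (T pi) Ds"
    by (rule sum.mono_neutral_right[where S="{pi}", simplified]) (use pip zero finite_permutations in auto)
  also have "\<dots> = signof pi * (\<Prod>i = 0..<m. coeff (V $$ (i, pi i)) (d i))" using Tp[OF pip] by simp
  finally have cD: "coeff (det V) Ds = signof pi * (\<Prod>i = 0..<m. coeff (V $$ (i, pi i)) (d i))" .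
  have "(\<Prod>i = 0..<m. coeff (V $$ (i, pi i)) (d i)) \<noteq> 0"
  proof -
    have "\<forall>i\<in>{0..<m}. coeff (V $$ (i, pi i)) (d i) \<noteq> 0"
      using rowP(3,4) by (metis atLeastLessThan_iff leading_coeff_0_iff pi_def)
    then show ?thesis by simp
  qed
  moreover have "(signof pi :: 'a) \<noteq> 0" by (simp add: sign_def)
  ultimately have cnz: "coeff (det V) Ds \<noteq> 0" using cD by simp
  have "degree (det V) \<le> Ds" unfolding detV
    by (rule degree_sum_le) (use Tp finite_permutations in auto)
  moreover have "Ds \<le> degree (det V)" using cnz le_degree by blast
  ultimately have "degree (det V) = Ds" by simp
  moreover have "det V \<noteq> 0" using cnz by auto
  moreover have "mat_deg V = Ds" unfolding mat_deg_def Ds_def d_def dims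
    using atLeast0LessThan by simp
  ultimately show ?thesis by simp
qed




lemma mult_W_index:
  fixes A :: "'a::comm_ring_1 poly mat"
  assumes A: "A \<in> carrier_mat r (l+1)" and i: "i < r" and j: "j < l+1"
  shows "(A * W_mat k l) $$ (i,j) = A $$ (i,j) * monom 1 (j * (k-1))"
proof -
  have W: "(W_mat k l :: 'a poly mat) \<in> carrier_mat (l+1) (l+1)" by (simp add: W_mat_def)
  have dA: "dim_row A = r" "dim_col A = l+1" using A by auto
  have dW: "dim_row (W_mat k l :: 'a poly mat) = l+1" "dim_col (W_mat k l :: 'a poly mat) = l+1" using W by auto
  have "(A * W_mat k l) $$ (i,j) = row A i \<bullet> col (W_mat k l) j"
    using dA dW i j by (intro index_mult_mat(1)) auto
  also have "\<dots> = (\<Sum>t\<in>{0..<l+1}. A $$ (i,t) * W_mat k l $$ (t,j))"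
    unfolding scalar_prod_def using dA dW i j by (intro sum.cong) auto
  also have "\<dots> = A $$ (i,j) * W_mat k l $$ (j,j)"
  proof -
    have "(\<Sum>t\<in>{0..<l+1}. A $$ (i,t) * W_mat k l $$ (t,j)) = A $$ (i,j) * W_mat k l $$ (j,j) + (\<Sum>t\<in>{0..<l+1} - {j}. A $$ (i,t) * W_mat k l $$ (t,j))"
      using j by (intro sum.remove) auto
    moreover have "(\<Sum>t\<in>{0..<l+1} - {j}. A $$ (i,t) * W_mat k l $$ (t,j)) = 0"
      using j by (intro sum.neutral) (auto simp: W_mat_def)
    ultimately show ?thesis by simp
  qed
  also have "\<dots> = A $$ (i,j) * monom 1 (j * (k-1))" using j by (simp add: W_mat_def)
  finally show ?thesis .
qed

lemma coeff_lin_pow_deg: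
  fixes R :: "'a::idom poly"
  shows "degree (coeff ([:-R,1:]^s) j) \<le> (s - j) * degree R"
proof (induction s arbitrary: j)
  case 0 then show ?case by (cases j) auto
next
  case (Suc s)
  let ?Q = "[:-R,1:]^s"
  have dQ: "degree ?Q = s" by (rule degree_linear_power)
  have eq: "[:-R,1:]^Suc s = smult (-R) ?Q + pCons 0 ?Q"
    by (simp add: mult_pCons_left)
  show ?case
  proof (cases j)
    case 0
    have "degree (coeff ([:-R,1:]^Suc s) j) = degree (-R * coeff ?Q 0)" using 0 eq by simp
    also have "\<dots> \<le> degree R + degree (coeff ?Q 0)" using degree_mult_le[of "-R"] by simp
    also have "\<dots> \<le> degree R + s * degree R" using Suc[of 0] by simp
    finally show ?thesis using 0 by simp
  next
    case (Suc j')
    have c: "coeff ([:-R,1:]^Suc s) j = -R * coeff ?Q (Suc j') + coeff ?Q j'" using Suc eq by simp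
    have d1: "degree (-R * coeff ?Q (Suc j')) \<le> (s - j') * degree R"
    proof (cases "Suc j' \<le> s")
      case True
      have "degree (-R * coeff ?Q (Suc j')) \<le> degree R + degree (coeff ?Q (Suc j'))"
        using degree_mult_le[of "-R"] by simp
      also have "\<dots> \<le> degree R + (s - Suc j') * degree R" using Suc.IH[of "Suc j'"] by simp
      also have "\<dots> = (s - j') * degree R" using True
        by (metis Suc_diff_Suc Suc_le_lessD mult_Suc)
      finally show ?thesis .
    next
      case False
      then have "coeff ?Q (Suc j') = 0" using dQ by (simp add: coeff_eq_0)
      then show ?thesis by simp
    qed
    have d2: "degree (coeff ?Q j') \<le> (s - j') * degree R" by (rule Suc.IH)
    have "degree (coeff ([:-R,1:]^Suc s) j) \<le> (s - j') * degree R"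
      unfolding c using degree_add_le[OF d1 d2] .
    then show ?thesis using Suc by simp
  qed
qed

lemma basis_rows_nz:
  fixes B :: "'a::field poly mat"
  assumes B: "B \<in> carrier_mat (l+1) (l+1)" and rb: "represents_basis B M" and z: "0 \<in> M"
    and i: "i < l+1"
  shows "\<exists>j<l+1. B $$ (i,j) \<noteq> 0"
proof (rule ccontr)
  assume "\<not> (\<exists>j<l+1. B $$ (i,j) \<noteq> 0)"
  then have allz: "\<forall>j<l+1. B $$ (i,j) = 0" by auto
  have vz: "vec_to_bpoly (row B i) = 0"
    unfolding vec_to_bpoly_def using B i allz by (intro sum.neutral) auto
  have dr: "dim_row B = l+1" using B by simp
  let ?P = "\<lambda>c. dim_vec c = dim_row B \<and> (0::'a poly poly) = (\<Sum>t<dim_row B. smult (c $ t) (vec_to_bpoly (row B t)))"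
  from rb z have ex1: "\<exists>!c. ?P c" unfolding represents_basis_def by blast
  have p1: "?P (0\<^sub>v (l+1))" using dr by simp
  have p2: "?P (unit_vec (l+1) i)"
  proof -
    have "(\<Sum>t<dim_row B. smult (unit_vec (l+1) i $ t) (vec_to_bpoly (row B t))) = 0"
      using dr vz i by (intro sum.neutral) (auto simp: unit_vec_def)
    then show ?thesis using dr by simp
  qed
  have "0\<^sub>v (l+1) \<noteq> (unit_vec (l+1) i :: 'a poly vec)"
  proof
    assume "0\<^sub>v (l+1) = (unit_vec (l+1) i :: 'a poly vec)"
    then have "(0\<^sub>v (l+1) :: 'a poly vec) $ i = unit_vec (l+1) i $ i" by simp
    then show False using i by simp
  qed
  with ex1 p1 p2 show False by blast
qed

theorem lemma8:
  fixes alpha w r :: "nat \<Rightarrow> 'a::{field,finite}"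
    and n k s l :: nat and R :: "'a poly" and B :: "'a poly mat"
  assumes "1 \<le> k" "k < n" "n < card (UNIV :: 'a set)"
    and "\<forall>i<n. \<forall>j<n. i \<noteq> j \<longrightarrow> alpha i \<noteq> alpha j"
    and "\<forall>i<n. alpha i \<noteq> 0" "\<forall>i<n. w i \<noteq> 0"
    and "degree R < n" "\<forall>i<n. poly R (alpha i) = r i / w i"
    and "\<not> (\<exists>f. degree f < k \<and> (\<forall>i<n. r i = w i * poly f (alpha i)))"
    and "0 < s" "s \<le> l"
    and "B \<in> carrier_mat (l+1) (l+1)"
    and "represents_basis B (M_module n s l alpha (\<lambda>i. r i / w i))"
    and "weak_popov (B * W_mat k l)"
  shows "Delta (C_I B l s R * W_mat k (l+1)) = int s * (int (degree R) - int k + 1)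
       \<and> int s * (int (degree R) - int k + 1) \<le> int s * (int n - int k)"
proof -
  let ?M = "M_module n s l alpha (\<lambda>i. r i / w i)"
  define V where "V = B * W_mat k l"
  define C where "C = C_I B l s R"
  define D where "D = C * W_mat k (l+1)"
  define dR where "dR = degree R"
  define a where "a = l - s + 1"
  define Q where "Q = [:-R,1:]^s"
  define P where "P = monom (1::'a poly) a * Q"
  have as: "a + s = l + 1" using assms(11) by (simp add: a_def)
  have dRk: "k \<le> dR"
  proof (rule ccontr)
    assume "\<not> k \<le> dR"
    then have "degree R < k" by (simp add: dR_def)
    moreover have "\<forall>i<n. r i = w i * poly R (alpha i)" using assms(6,8) by simp
    ultimately show False using assms(9) by blast
  qed
  have Rnz: "R \<noteq> 0" using dRk assms(1) dR_def by auto
  have B: "B \<in> carrier_mat (l+1) (l+1)" by fact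
  have zM: "0 \<in> ?M" by (simp add: M_module_def shift_XY_def no_low_monomials_def)
  have Bnz: "\<forall>i<l+1. \<exists>j<l+1. B $$ (i,j) \<noteq> 0"
    using basis_rows_nz[OF B assms(13) zM] by blast
  have Vc: "V \<in> carrier_mat (l+1) (l+1)" unfolding V_def using B by (simp add: W_mat_def)
  have Vidx: "V $$ (i,j) = B $$ (i,j) * monom 1 (j*(k-1))" if "i < l+1" "j < l+1" for i j
    unfolding V_def by (rule mult_W_index[OF B that])
  have Vnz: "\<forall>i<l+1. \<exists>j<l+1. V $$ (i,j) \<noteq> 0"
  proof (intro allI impI)
    fix i assume i: "i < l+1"
    then obtain j where j: "j < l+1" "B $$ (i,j) \<noteq> 0" using Bnz by blast
    have "(monom (1::'a poly) (j*(k-1))) \<noteq> 0" by (simp add: monom_eq_0_iff)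
    then have "V $$ (i,j) \<noteq> 0" using Vidx[OF i j(1)] j(2) by simp
    then show "\<exists>j<l+1. V $$ (i,j) \<noteq> 0" using j(1) by blast
  qed
  have wpV: "weak_popov V" using assms(14) by (simp add: V_def)
  from weak_popov_det[OF Vc wpV Vnz]
  have detV: "det V \<noteq> 0" "degree (det V) = mat_deg V" by auto
  have Cc: "C \<in> carrier_mat (l+2) (l+2)" by (simp add: C_def C_I_def)
  have Cidx1: "C $$ (i,j) = B $$ (i,j)" if "i \<le> l" "j \<le> l" for i j
    using that by (simp add: C_def C_I_def)
  have Cidx2: "C $$ (i,l+1) = 0" if "i \<le> l" for i
    using that by (simp add: C_def C_I_def)
  have Cidx3: "C $$ (l+1,j) = coeff P j" if "j < l+2" for j
    using that by (simp add: C_def C_I_def coeff_vec_def P_def Q_def a_def)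
  have Dc: "D \<in> carrier_mat (l+2) (l+2)" unfolding D_def using Cc by (simp add: W_mat_def)
  have Didx: "D $$ (i,j) = C $$ (i,j) * monom 1 (j*(k-1))" if "i < l+2" "j < l+2" for i j
    unfolding D_def by (rule mult_W_index[of C "l+2" "l+1"]) (use Cc that in auto)
  have cP: "coeff P j = (if j < a then 0 else coeff Q (j - a))" for j
    by (simp add: P_def coeff_monom_mult)
  have Dll: "D $$ (l+1,l+1) = monom 1 ((l+1)*(k-1))"
  proof -
    have las: "l+1-a = s" using as by simp
    have "coeff P (l+1) = coeff Q s" using cP[of "l+1"] as las by simp
    also have "\<dots> = 1" unfolding Q_def by (rule coeff_linear_power)
    finally show ?thesis using Didx[of "l+1" "l+1"] Cidx3[of "l+1"] by simp
  qed
  have delV: "mat_delete D (l+1) (l+1) = V"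
  proof (rule eq_matI)
    show "dim_row (mat_delete D (l+1) (l+1)) = dim_row V" using Dc Vc by (simp add: mat_delete_def)
    show "dim_col (mat_delete D (l+1) (l+1)) = dim_col V" using Dc Vc by (simp add: mat_delete_def)
    fix i j assume i: "i < dim_row V" and j: "j < dim_col V"
    then have i': "i < l+1" and j': "j < l+1" using Vc by auto
    have "mat_delete D (l+1) (l+1) $$ (i,j) = D $$ (i,j)"
      using i' j' Dc by (simp add: mat_delete_def)
    also have "\<dots> = V $$ (i,j)" using i' j' Didx[of i j] Cidx1[of i j] Vidx[OF i' j'] by simp
    finally show "mat_delete D (l+1) (l+1) $$ (i,j) = V $$ (i,j)" .
  qed
  have "det D = (\<Sum>i<l+2. D $$ (i,l+1) * cofactor D i (l+1))"
    by (rule laplace_expansion_column[OF Dc]) simp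
  also have "\<dots> = (\<Sum>i<l+1. D $$ (i,l+1) * cofactor D i (l+1)) + D $$ (l+1,l+1) * cofactor D (l+1) (l+1)"
    by simp
  also have "(\<Sum>i<l+1. D $$ (i,l+1) * cofactor D i (l+1)) = 0"
  proof (intro sum.neutral ballI)
    fix i assume "i \<in> {..<l+1}"
    then have "i \<le> l" by simp
    then show "D $$ (i,l+1) * cofactor D i (l+1) = 0" using Didx[of i "l+1"] Cidx2[of i] by simp
  qed
  also have "cofactor D (l+1) (l+1) = det V"
    unfolding cofactor_def delV by simp
  finally have detD: "det D = monom 1 ((l+1)*(k-1)) * det V" using Dll by simp
  have degdetD: "degree (det D) = (l+1)*(k-1) + mat_deg V"
    unfolding detD using detV by (simp add: degree_mult_eq monom_eq_0_iff degree_monom_eq)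
  have rowD: "row D i $ j = D $$ (i,j)" if "i < l+2" "j < l+2" for i j
    using that Dc by simp
  have dimrowD: "dim_vec (row D i) = l+2" for i using Dc by simp
  have rowDi: "vdeg (row D i) = vdeg (row V i)" if i: "i < l+1" for i
  proof -
    have ex: "\<exists>j<dim_vec (row V i). row V i $ j \<noteq> 0"
    proof -
      obtain j where j: "j < l+1" "V $$ (i,j) \<noteq> 0" using Vnz i by blast
      then have "row V i $ j \<noteq> 0" using Vc i by simp
      then show ?thesis using j Vc by auto
    qed
    note PP = vdeg_props[OF ex]
    have dv: "dim_vec (row V i) = l+1" using Vc by simp
    have DV: "D $$ (i,j) = V $$ (i,j)" if "j < l+1" for j
      using that i Didx[of i j] Cidx1[of i j] Vidx[OF i that] by simp
    have rV: "row V i $ j = V $$ (i,j)" if "j < l+1" for j using that i Vc by simp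
    show ?thesis
    proof (rule vdeg_eqI[of "row D i" "vdeg (row V i)" "LP (row V i)"])
      show "\<forall>j<dim_vec (row D i). degree (row D i $ j) \<le> vdeg (row V i)"
      proof (intro allI impI)
        fix j assume "j < dim_vec (row D i)"
        then have j: "j < l+2" using Dc by (simp add: dimrowD)
        show "degree (row D i $ j) \<le> vdeg (row V i)"
        proof (cases "j < l+1")
          case True then show ?thesis using PP(1) rowD[of i j] i j DV rV dv by simp
        next
          case False then have "j = l+1" using j by simp
          then show ?thesis using rowD[of i j] i j Didx[of i j] Cidx2[of i] by simp
        qed
      qed
      have L: "LP (row V i) < l+1" using PP(2) dv by simp
      show "LP (row V i) < dim_vec (row D i)" using L using Dc by (simp add: dimrowD)
      show "row D i $ LP (row V i) \<noteq> 0" using PP(3) L rowD[of i "LP (row V i)"] i DV rV by simp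
      show "degree (row D i $ LP (row V i)) = vdeg (row V i)"
        using PP(4) L rowD[of i "LP (row V i)"] i DV rV by simp
    qed
  qed
  have DL: "D $$ (l+1,j) = coeff P j * monom 1 (j*(k-1))" if "j < l+2" for j
    using Didx[of "l+1" j] Cidx3[of j] that by simp
  have lastrow: "vdeg (row D (l+1)) = s*dR + a*(k-1)"
  proof (rule vdeg_eqI[of "row D (l+1)" "s*dR + a*(k-1)" a])
    show "\<forall>j<dim_vec (row D (l+1)). degree (row D (l+1) $ j) \<le> s*dR + a*(k-1)"
    proof (intro allI impI)
      fix j assume "j < dim_vec (row D (l+1))"
      then have j: "j < l+2" using Dc by (simp add: dimrowD)
      show "degree (row D (l+1) $ j) \<le> s*dR + a*(k-1)"
      proof (cases "j < a")
        case True then show ?thesis using rowD[of "l+1" j] j DL[OF j] cP[of j] by simp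
      next
        case False
        define t where "t = j - a"
        have jt: "j = a + t" and ts: "t \<le> s" using False j as by (auto simp: t_def)
        have "degree (row D (l+1) $ j) = degree (coeff Q t * monom 1 (j*(k-1)))"
          using rowD[of "l+1" j] j DL[OF j] cP[of j] False by (simp add: t_def)
        also have "\<dots> \<le> degree (coeff Q t) + j*(k-1)"
          using degree_mult_le[of "coeff Q t" "monom 1 (j*(k-1))"] by (simp add: degree_monom_eq)
        also have "\<dots> \<le> (s - t)*dR + (a+t)*(k-1)"
          using coeff_lin_pow_deg[of R s t] jt by (simp add: Q_def dR_def)
        also have "\<dots> \<le> s*dR + a*(k-1)"
        proof -
          have h1: "t*(k-1) \<le> t*dR" using dRk by (intro mult_le_mono2) simp
          have h2: "(s-t)*dR + t*dR = s*dR" using ts by (simp add: add_mult_distrib[symmetric])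
          have h3: "(a+t)*(k-1) = a*(k-1) + t*(k-1)" by (simp add: add_mult_distrib)
          show ?thesis using h1 h2 h3 by linarith
        qed
        finally show ?thesis .
      qed
    qed
    have a2: "a < l+2" using as by simp
    show "a < dim_vec (row D (l+1))" using a2 using Dc by (simp add: dimrowD)
    have cQ0: "coeff Q 0 = (-R)^s" unfolding Q_def by (simp add: coeff_0_power)
    have e: "row D (l+1) $ a = (-R)^s * monom 1 (a*(k-1))"
      using rowD[of "l+1" a] a2 DL[OF a2] cP[of a] cQ0 by simp
    have nz1: "(-R)^s \<noteq> 0" using Rnz by simp
    have nz2: "monom (1::'a poly) (a*(k-1)) \<noteq> 0" by (simp add: monom_eq_0_iff)
    show "row D (l+1) $ a \<noteq> 0" using e nz1 nz2 by simp
    show "degree (row D (l+1) $ a) = s*dR + a*(k-1)"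
      unfolding e using nz1 nz2 Rnz
      by (simp add: degree_mult_eq degree_power_eq degree_monom_eq dR_def)
  qed
  have mdD: "mat_deg D = mat_deg V + (s*dR + a*(k-1))"
  proof -
    have "mat_deg D = (\<Sum>i<l+2. vdeg (row D i))" using Dc by (simp add: mat_deg_def)
    also have "\<dots> = (\<Sum>i<l+1. vdeg (row D i)) + vdeg (row D (l+1))" by simp
    also have "(\<Sum>i<l+1. vdeg (row D i)) = (\<Sum>i<l+1. vdeg (row V i))"
      by (rule sum.cong) (auto simp: rowDi)
    also have "\<dots> = mat_deg V" using Vc by (simp add: mat_deg_def)
    finally show ?thesis using lastrow by simp
  qed
  have ak: "(l+1)*(k-1) = a*(k-1) + s*(k-1)" using as by (metis add_mult_distrib)
  have k1: "int (k-1) = int k - 1" using assms(1) by simp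
  have "Delta D = int (s*dR) - int (s*(k-1))"
    unfolding Delta_def mdD degdetD ak by simp
  also have "\<dots> = int s * (int dR - int k + 1)" using k1 by (simp add: algebra_simps)
  finally have c1: "Delta D = int s * (int dR - int k + 1)" .
  have "int dR - int k + 1 \<le> int n - int k" using assms(7) by (simp add: dR_def)
  then have c2: "int s * (int dR - int k + 1) \<le> int s * (int n - int k)"
    by (rule mult_left_mono) simp
  show ?thesis using c1 c2 by (simp add: D_def C_def dR_def)
qed

end
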